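(* There exist constants $c>0$ and $r_*>0$, depending only on $m$ and $\{p_1,\dots,p_m\}$, such that for all $0<r<r_*$ and all real $y$ with $r^{2/3}<|y|\le\tfrac12$, the number of $h\in\mathcal S(r)$ with $\|hy\|\ge \frac{1}{3p_1}$ is at least $c(\log 1/r)^{m-1}$.
   Context: Fix an integer $m\ge 2$ and integers $1<p_1<\dots<p_m$ with $\gcd(p_i,p_j)=1$ for $i\neq j$; let $\mathcal S=\{p_1^{\alpha_1}\cdots p_m^{\alpha_m}:\alpha_i\in\mathbb Z_{\ge0}\}$ and $\mathcal S(r)=\{h\in\mathcal S: hr\le1\}$ for $r>0$. $\|x\|$ denotes the distance from the real number $x$ to the nearest integer. *)

theory Defs
  imports Complex_Main
begin

definition smooth_set :: "nat \<Rightarrow> (nat \<Rightarrow> nat) \<Rightarrow> nat set" where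
  "smooth_set m p = {\<Prod>i\<in>{1..m}. p i ^ a i | a :: nat \<Rightarrow> nat. True}"

definition smooth_set_r :: "nat \<Rightarrow> (nat \<Rightarrow> nat) \<Rightarrow> real \<Rightarrow> nat set" where
  "smooth_set_r m p r = {h \<in> smooth_set m p. real h * r \<le> 1}"

definition dist_int :: "real \<Rightarrow> real" where
  "dist_int x = min (x - of_int \<lfloor>x\<rfloor>) (of_int \<lceil>x\<rceil> - x)"

end

theory Submission
  imports Defs "HOL-Library.FuncSet"
begin

lemma dist_int_le: "dist_int z \<le> \<bar>z - of_int n\<bar>"
proof (cases "of_int n \<le> z")
  case True
  then have "n \<le> \<lfloor>z\<rfloor>" by (simp add: le_floor_iff)
  then have "z - of_int \<lfloor>z\<rfloor> \<le> z - of_int n" by simp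
  then show ?thesis unfolding dist_int_def using True by linarith
next
  case False
  then have "\<lceil>z\<rceil> \<le> n" by (simp add: ceiling_le_iff)
  then have "of_int \<lceil>z\<rceil> - z \<le> of_int n - z" by simp
  then show ?thesis unfolding dist_int_def using False by linarith
qed

lemma dist_int_ex: "\<exists>n. dist_int z = \<bar>z - of_int n\<bar>"
proof -
  have a: "z - of_int \<lfloor>z\<rfloor> \<ge> 0" by simp
  have b: "of_int \<lceil>z\<rceil> - z \<ge> 0" by simp
  show ?thesis
  proof (cases "z - of_int \<lfloor>z\<rfloor> \<le> of_int \<lceil>z\<rceil> - z")
    case True then show ?thesis unfolding dist_int_def using a by (intro exI[of _ "\<lfloor>z\<rfloor>"]) auto
  next
    case False then show ?thesis unfolding dist_int_def using b by (intro exI[of _ "\<lceil>z\<rceil>"]) auto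
  qed
qed

lemma dist_int_nonneg: "dist_int z \<ge> 0"
  using dist_int_ex[of z] by auto

lemma dist_int_eq: assumes "\<bar>z - of_int n\<bar> \<le> 1/2" shows "dist_int z = \<bar>z - of_int n\<bar>"
proof -
  obtain n0 where n0: "dist_int z = \<bar>z - of_int n0\<bar>" using dist_int_ex by blast
  have le: "dist_int z \<le> \<bar>z - of_int n\<bar>" by (rule dist_int_le)
  show ?thesis
  proof (cases "n0 = n")
    case True then show ?thesis using n0 by simp
  next
    case False
    then have "\<bar>n - n0\<bar> \<ge> 1" by linarith
    then have "\<bar>of_int n - of_int n0 :: real\<bar> \<ge> 1" by (metis of_int_1_le_iff of_int_abs of_int_diff)
    then have "\<bar>z - of_int n0\<bar> \<ge> \<bar>z - of_int n\<bar>" using assms by linarith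
    then show ?thesis using n0 le by linarith
  qed
qed

lemma dist_int_pert: "dist_int (x + e) \<ge> dist_int x - \<bar>e\<bar>"
proof -
  obtain n where n: "dist_int (x+e) = \<bar>x + e - of_int n\<bar>" using dist_int_ex by blast
  have "dist_int x \<le> \<bar>x - of_int n\<bar>" by (rule dist_int_le)
  then show ?thesis using n by linarith
qed

lemma dist_int_frac:
  fixes z pp :: int assumes "pp > 0" "\<not> pp dvd z"
  shows "dist_int (of_int z / of_int pp) \<ge> 1 / of_int pp"
proof -
  obtain n where n: "dist_int (of_int z / of_int pp) = \<bar>of_int z / of_int pp - of_int n\<bar>" using dist_int_ex by blast
  have "z - n * pp \<noteq> 0"
  proof
    assume "z - n * pp = 0"
    then have "z = pp * n" by simp
    then show False using assms(2) by simp
  qed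
  then have w1: "\<bar>z - n*pp\<bar> \<ge> 1" by linarith
  have ppr: "real_of_int pp > 0" using assms(1) by simp
  have e: "of_int z / of_int pp - of_int n = real_of_int (z - n * pp) / of_int pp"
    using ppr by (simp add: divide_simps)
  have "\<bar>real_of_int (z - n * pp) / of_int pp\<bar> = real_of_int \<bar>z - n * pp\<bar> / of_int pp"
    by (simp only: abs_div_pos[OF ppr, symmetric] of_int_abs)
  moreover have "real_of_int \<bar>z - n * pp\<bar> \<ge> 1" using w1 by linarith
  ultimately have "\<bar>real_of_int (z - n * pp) / of_int pp\<bar> \<ge> 1 / of_int pp"
    using ppr by (simp add: divide_right_mono)
  then show ?thesis using n e by simp
qed

lemma chain1:
  fixes q :: nat assumes "q \<ge> 1" "dist_int x < 1 / (3 * real q)"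
  shows "dist_int (real q * x) = real q * dist_int x"
proof -
  obtain n where n: "dist_int x = \<bar>x - of_int n\<bar>" using dist_int_ex by blast
  have "real q * \<bar>x - of_int n\<bar> < real q * (1 / (3 * real q))"
    using assms n by (intro mult_strict_left_mono) auto
  also have "\<dots> = 1/3" using assms by simp
  finally have h: "\<bar>real q * x - of_int (int q * n)\<bar> < 1/3"
    by (simp add: abs_mult right_diff_distrib[symmetric])
  then have "dist_int (real q * x) = \<bar>real q * x - of_int (int q * n)\<bar>" by (intro dist_int_eq) simp
  also have "\<dots> = real q * \<bar>x - of_int n\<bar>" by (simp add: abs_mult right_diff_distrib[symmetric])
  finally show ?thesis using n by simp
qed

lemma chainN:
  fixes q :: nat assumes "q \<ge> 1"
  shows "(\<forall>i<j. dist_int (real q ^ i * x) < 1 / (3 * real q)) \<Longrightarrow> dist_int (real q ^ j * x) = real q ^ j * dist_int x"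
proof (induction j)
  case 0 then show ?case by simp
next
  case (Suc j)
  then have ih: "dist_int (real q ^ j * x) = real q ^ j * dist_int x" by simp
  have "dist_int (real q ^ j * x) < 1 / (3 * real q)" using Suc.prems by simp
  then have "dist_int (real q * (real q ^ j * x)) = real q * dist_int (real q ^ j * x)"
    using assms by (intro chain1) auto
  then show ?case using ih by (simp add: mult.assoc)
qed



locale sset =
  fixes m :: nat and p :: "nat \<Rightarrow> nat"
  assumes m2: "m \<ge> 2" and p1: "1 < p 1"
    and pmono: "\<forall>i j. 1 \<le> i \<longrightarrow> i < j \<longrightarrow> j \<le> m \<longrightarrow> p i < p j"
    and pcop: "\<forall>i\<in>{1..m}. \<forall>j\<in>{1..m}. i \<noteq> j \<longrightarrow> coprime (p i) (p j)"
begin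

definition pr :: "(nat \<Rightarrow> nat) \<Rightarrow> nat" where "pr a = (\<Prod>i\<in>{1..m}. p i ^ a i)"

lemma p_gt1: "i \<in> {1..m} \<Longrightarrow> p i > 1"
  using p1 pmono by (cases "i = 1") (auto, metis le_eq_less_or_eq order.strict_trans less_one not_less)

lemma p_le: "i \<in> {1..m} \<Longrightarrow> p i \<le> p m"
  using pmono by (cases "i = m") (auto intro: less_imp_le)

lemma pr_in: "pr a \<in> smooth_set m p"
  unfolding smooth_set_def pr_def by blast

lemma pr_pos: "pr a > 0"
  unfolding pr_def
proof (intro prod_pos)
  fix i assume "i \<in> {1..m}"
  then have "p i > 0" using p_gt1 by fastforce
  then show "0 < p i ^ a i" by simp
qed

lemma pr_add: "pr (\<lambda>i. a i + b i) = pr a * pr b"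
  unfolding pr_def by (simp add: power_add prod.distrib)

lemma pr_q: "pr (\<lambda>j. if j = 1 then k else 0) = p 1 ^ k"
proof -
  have "pr (\<lambda>j. if j = 1 then k else 0) = (\<Prod>j\<in>{1..m}. if j = 1 then p 1 ^ k else 1)"
    unfolding pr_def by (intro prod.cong) auto
  also have "\<dots> = p 1 ^ k" using m2 by (subst prod.delta) auto
  finally show ?thesis .
qed

lemma pr_split: "i \<in> {1..m} \<Longrightarrow> pr a = p i ^ a i * (\<Prod>j\<in>{1..m}-{i}. p j ^ a j)"
  unfolding pr_def by (rule prod.remove) auto

lemma pr_cop_rest: "i \<in> {1..m} \<Longrightarrow> coprime (p i ^ k) (\<Prod>j\<in>{1..m}-{i}. p j ^ a j)"
  using pcop by (intro prod_coprime_right) auto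

lemma pr_le_exp: assumes "pr a = pr b" "i \<in> {1..m}" shows "a i \<le> b i"
proof -
  have "p i ^ a i dvd pr b" using assms pr_split[of i a] by simp
  then have "p i ^ a i dvd p i ^ b i * (\<Prod>j\<in>{1..m}-{i}. p j ^ b j)" using pr_split[OF assms(2)] by simp
  then have "p i ^ a i dvd p i ^ b i"
    using coprime_dvd_mult_left_iff[OF pr_cop_rest[OF assms(2)]] by blast
  then show ?thesis using power_dvd_imp_le p_gt1[OF assms(2)] by blast
qed

lemma pr_unique: "pr a = pr b \<Longrightarrow> i \<in> {1..m} \<Longrightarrow> a i = b i"
  using pr_le_exp[of a b i] pr_le_exp[of b a i] by simp

lemma pr_bound: assumes "\<forall>j\<in>{1..m}. a j \<le> A" shows "pr a \<le> p m ^ (A * m)"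
proof -
  have "pr a \<le> (\<Prod>j\<in>{1..m}. p m ^ A)"
    unfolding pr_def
  proof (intro prod_mono conjI)
    fix j assume j: "j \<in> {1..m}"
    have "p j ^ a j \<le> p j ^ A" using assms j p_gt1[OF j] by (intro power_increasing) auto
    also have "\<dots> \<le> p m ^ A" using p_le[OF j] by (intro power_mono) auto
    finally show "p j ^ a j \<le> p m ^ A" .
  qed simp
  also have "\<dots> = p m ^ (A * m)" by (simp add: power_mult)
  finally show ?thesis .
qed

lemma pr_cop: assumes "i \<in> {1..m}" "a i = 0" shows "coprime (p i) (pr a)"
  using pr_cop_rest[OF assms(1), of 1 a] pr_split[OF assms(1), of a] assms by simp

lemma pr_dec: assumes "i \<in> {1..m}" "c i > 0" shows "pr c = p i * pr (c(i := c i - 1))"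
proof -
  have "pr (c(i := c i - 1)) = p i ^ (c i - 1) * (\<Prod>j\<in>{1..m}-{i}. p j ^ c j)"
    using pr_split[OF assms(1), of "c(i := c i - 1)"] by simp
  moreover have "pr c = p i ^ (c i) * (\<Prod>j\<in>{1..m}-{i}. p j ^ c j)" using pr_split[OF assms(1)] .
  moreover have "p i ^ c i = p i * p i ^ (c i - 1)" using assms(2) by (cases "c i") auto
  ultimately show ?thesis by simp
qed

end


context sset begin

lemma sum_dec: fixes c :: "nat \<Rightarrow> nat" assumes "i \<in> {1..m}" "c i > 0"
  shows "sum (c(i := c i - 1)) {1..m} = sum c {1..m} - 1"
proof -
  have "sum (c(i := c i - 1)) {1..m} = (c i - 1) + sum c ({1..m} - {i})"
    using sum.remove[of "{1..m}" i "c(i := c i - 1)"] assms(1)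
      sum.cong[of "{1..m} - {i}" "{1..m} - {i}" "c(i := c i - 1)" c] by simp
  moreover have "sum c {1..m} = c i + sum c ({1..m} - {i})"
    using sum.remove[of "{1..m}" i c] assms(1) by simp
  moreover have "c i - 1 + sum c ({1..m} - {i}) = c i + sum c ({1..m} - {i}) - 1"
    using assms(2) Nat.add_diff_assoc2[of 1 "c i" "sum c ({1..m} - {i})"] by simp
  ultimately show ?thesis by simp
qed

lemma descent:
  fixes y \<epsilon> :: real
  assumes eps: "0 \<le> \<epsilon>" "\<epsilon> < 1/2" "\<epsilon> < \<bar>y\<bar>" "\<bar>y\<bar> \<le> 1/2"
  shows "sum c {1..m} = s \<Longrightarrow> c 1 = 0 \<Longrightarrow> \<bar>real (pr c) * y - of_int n0\<bar> \<le> \<epsilon> * pr c \<Longrightarrow>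
    \<exists>d i N. pr d \<le> pr c \<and> i \<in> {2..m} \<and> \<not> int (p i) dvd N \<and>
      \<bar>real (pr d) * y - of_int N / real (p i)\<bar> \<le> \<epsilon> * pr d"
proof (induction s arbitrary: c n0)
  case 0
  then have "\<forall>j\<in>{1..m}. c j = 0" by simp
  then have "pr c = 1" unfolding pr_def by simp
  then have h: "\<bar>y - of_int n0\<bar> \<le> \<epsilon>" using "0.prems" by simp
  show ?case
  proof (cases "n0 = 0")
    case True then show ?thesis using h eps by simp
  next
    case False
    then have "\<bar>n0\<bar> \<ge> 1" by linarith
    then have "\<bar>real_of_int n0\<bar> \<ge> 1" by linarith
    then show ?thesis using h eps by linarith
  qed
next
  case (Suc s)
  have "\<exists>i\<in>{1..m}. c i > 0"
  proof (rule ccontr)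
    assume "\<not> ?thesis"
    then have "sum c {1..m} = 0" by simp
    then show False using Suc.prems by simp
  qed
  then obtain i where i: "i \<in> {1..m}" "c i > 0" by blast
  have i1: "i \<noteq> 1" using i Suc.prems(2) by auto
  define c' where "c' = c(i := c i - 1)"
  have sc': "sum c' {1..m} = s" unfolding c'_def using sum_dec[of i c, OF i] Suc.prems(1) by simp
  have c'1: "c' 1 = 0" unfolding c'_def using i1 Suc.prems(2) by simp
  have prc: "pr c = p i * pr c'" unfolding c'_def using pr_dec[of i c, OF i] .
  have pi0: "real (p i) > 0" using p_gt1[OF i(1)] by simp
  have i2: "i \<in> {2..m}" using i i1 by auto
  show ?case
  proof (cases "int (p i) dvd n0")
    case True
    then obtain n1 where n1: "n0 = int (p i) * n1" by blast
    have "real (pr c) * y - of_int n0 = real (p i) * (real (pr c') * y - of_int n1)"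
      using prc n1 by (simp add: algebra_simps)
    then have "\<bar>real (pr c) * y - of_int n0\<bar> = real (p i) * \<bar>real (pr c') * y - of_int n1\<bar>"
      using pi0 by (simp add: abs_mult)
    then have "real (p i) * \<bar>real (pr c') * y - of_int n1\<bar> \<le> real (p i) * (\<epsilon> * pr c')"
      using Suc.prems(3) prc by (simp add: algebra_simps)
    then have "\<bar>real (pr c') * y - of_int n1\<bar> \<le> \<epsilon> * pr c'" using pi0 by simp
    then obtain d i' N where "pr d \<le> pr c'" "i' \<in> {2..m}" "\<not> int (p i') dvd N"
      "\<bar>real (pr d) * y - of_int N / real (p i')\<bar> \<le> \<epsilon> * pr d"
      using Suc.IH[OF sc' c'1] by blast
    moreover have "pr c' \<le> pr c" using prc p_gt1[OF i(1)] by simp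
    ultimately show ?thesis by (meson order_trans)
  next
    case False
    have "real (pr c') * y - of_int n0 / real (p i) = (real (pr c) * y - of_int n0) / real (p i)"
      using prc pi0 by (simp add: divide_simps algebra_simps)
    then have "\<bar>real (pr c') * y - of_int n0 / real (p i)\<bar> = \<bar>real (pr c) * y - of_int n0\<bar> / real (p i)"
      using pi0 by simp
    also have "\<dots> \<le> \<epsilon> * pr c / real (p i)" using Suc.prems(3) pi0 by (simp add: divide_right_mono)
    also have "\<dots> = \<epsilon> * pr c'" using prc pi0 by simp
    finally have "\<bar>real (pr c') * y - of_int n0 / real (p i)\<bar> \<le> \<epsilon> * pr c'" .
    moreover have "pr c' \<le> pr c" using prc p_gt1[OF i(1)] by simp
    ultimately show ?thesis using False i2 by blast
  qed
qed

end


context sset begin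

definition good :: "real \<Rightarrow> real \<Rightarrow> nat set" where
  "good r y = {h \<in> smooth_set_r m p r. dist_int (real h * y) \<ge> 1 / (3 * real (p 1))}"

lemma good_finite: assumes "r > 0" shows "finite (good r y)"
proof -
  have "good r y \<subseteq> {0..nat \<lceil>1/r\<rceil>}"
  proof
    fix h assume "h \<in> good r y"
    then have "real h * r \<le> 1" unfolding good_def smooth_set_r_def by simp
    then have "real h \<le> 1/r" using assms by (simp add: field_simps)
    then have "real h \<le> of_int \<lceil>1/r\<rceil>" by linarith
    then show "h \<in> {0..nat \<lceil>1/r\<rceil>}" by simp
  qed
  then show ?thesis by (rule finite_subset) simp
qed

lemma good_intro: "real (pr a) * r \<le> 1 \<Longrightarrow> dist_int (real (pr a) * y) \<ge> 1 / (3 * real (p 1)) \<Longrightarrow> pr a \<in> good r y"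
  unfolding good_def smooth_set_r_def using pr_in by simp

lemma q_big: "2 * p m \<le> 3 * p 1 ^ (p m + 1)"
proof -
  have "p m < 2 ^ p m" by (rule less_exp)
  also have "\<dots> \<le> p 1 ^ p m" using p1 by (intro power_mono) auto
  also have "\<dots> \<le> p 1 ^ (p m + 1)" using p1 by (intro power_increasing) auto
  finally show ?thesis by simp
qed

lemma block:
  fixes x :: real
  assumes "dist_int x \<ge> 2 / (3 * real (p m))"
  shows "\<exists>j\<le>p m. dist_int (real (p 1) ^ j * x) \<ge> 1 / (3 * real (p 1))"
proof (rule ccontr)
  assume "\<not> ?thesis"
  then have allle: "\<forall>j\<le>p m. dist_int (real (p 1) ^ j * x) < 1 / (3 * real (p 1))"
    by (meson not_le)
  then have all: "\<forall>j<p m. dist_int (real (p 1) ^ j * x) < 1 / (3 * real (p 1))"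
    and last: "dist_int (real (p 1) ^ p m * x) < 1 / (3 * real (p 1))"
    by auto
  have pm0: "real (p m) > 0" using p_gt1[of m] m2 by simp
  have q0: "real (p 1) > 0" using p1 by simp
  have "dist_int (real (p 1) ^ p m * x) = real (p 1) ^ p m * dist_int x"
    using chainN[of "p 1" "p m" x] all p1 by simp
  also have "\<dots> \<ge> real (p 1) ^ p m * (2 / (3 * real (p m)))"
    using assms by (intro mult_left_mono) auto
  finally have h: "real (p 1) ^ p m * (2 / (3 * real (p m))) < 1 / (3 * real (p 1))" using last by linarith
  have "real (2 * p m) \<le> real (3 * p 1 ^ (p m + 1))" using q_big by linarith
  then have "2 * real (p m) \<le> 3 * (real (p 1) ^ p m * real (p 1))" by (simp add: mult.commute)
  then have "1 / (3 * real (p 1)) \<le> real (p 1) ^ p m * (2 / (3 * real (p m)))"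
    using pm0 q0 by (simp add: divide_simps)
  then show False using h by linarith
qed

end


context sset begin

lemma mechB:
  fixes r y B0 :: real and A :: nat and d :: "nat \<Rightarrow> nat" and i :: nat and N :: int
  assumes r: "0 < r"
    and B1: "real (p m ^ (A*m)) \<le> B0" and B2: "real (p 1 ^ (A * (p m + 1))) \<le> B0"
    and B3: "B0^3 * r \<le> 1 / real (p m)"
    and D: "real (pr d) \<le> B0" and i: "i \<in> {2..m}" and N: "\<not> int (p i) dvd N"
    and approx: "\<bar>real (pr d) * y - of_int N / real (p i)\<bar> \<le> r/3 * real (pr d)"
  shows "A ^ (m-1) \<le> card (good r y)"
proof -
  define J where "J = {2..m} - {i}"
  define ext where "ext a = (\<lambda>j. if j \<in> J then a j else 0)" for a :: "nat \<Rightarrow> nat"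
  define e where "e a k = (\<lambda>j. d j + ((if j = 1 then k else 0) + ext a j))" for a k
  define BB where "BB = PiE J (\<lambda>_. {0..A}) \<times> {0..<A}"
  have pe: "pr (e a k) = pr d * (p 1 ^ k * pr (ext a))" for a k
  proof -
    have "pr (e a k) = pr d * pr (\<lambda>j. (if j = 1 then k else 0) + ext a j)"
      unfolding e_def by (rule pr_add)
    also have "pr (\<lambda>j. (if j = 1 then k else 0) + ext a j) = pr (\<lambda>j. if j = 1 then k else 0) * pr (ext a)"
      by (rule pr_add)
    finally show ?thesis using pr_q by simp
  qed
  have pmge: "real (p m) \<ge> 2" using p_gt1[of m] m2 by simp
  have B0ge: "B0 \<ge> 1"
  proof -
    have "p m ^ (A*m) \<ge> 1" using pmge by simp
    then show ?thesis using B1 by linarith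
  qed
  have gbound: "real (pr (ext a)) \<le> B0" if "a \<in> PiE J (\<lambda>_. {0..A})" for a
  proof -
    have "\<forall>j\<in>{1..m}. ext a j \<le> A" using that unfolding ext_def by (auto simp: PiE_iff)
    then have "pr (ext a) \<le> p m ^ (A * m)" by (rule pr_bound)
    then show ?thesis using B1 by (meson of_nat_le_iff order_trans)
  qed
  have qbound: "real (p 1 ^ k) \<le> B0" if "k < A * (p m + 1)" for k
  proof -
    have "p 1 ^ k \<le> p 1 ^ (A * (p m + 1))" using that p1 by (intro power_increasing) auto
    then show ?thesis using B2 by (meson of_nat_le_iff order_trans)
  qed
  have hbound: "real (pr (e a k)) \<le> B0^3" if "a \<in> PiE J (\<lambda>_. {0..A})" "k < A * (p m + 1)" for a k
  proof -
    have "real (pr (e a k)) = real (pr d) * (real (p 1 ^ k) * real (pr (ext a)))" using pe by simp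
    also have "\<dots> \<le> B0 * (B0 * B0)"
      using D gbound[OF that(1)] qbound[OF that(2)] B0ge
      by (intro mult_mono) auto
    also have "\<dots> = B0^3" by (simp add: power3_eq_cube)
    finally show ?thesis .
  qed
  have hr: "real (pr (e a k)) * r \<le> 1 / real (p m)" if "a \<in> PiE J (\<lambda>_. {0..A})" "k < A * (p m + 1)" for a k
    using hbound[OF that] r B3 by (meson mult_right_mono less_imp_le order_trans)
  have iJ: "i \<notin> J" "1 \<notin> J" "i \<noteq> 1" unfolding J_def using i by auto
  have pi0: "real (p i) > 0" using p_gt1[of i] i by simp
  have pile: "real (p i) \<le> real (p m)" using p_le[of i] i by simp
  have key: "\<exists>j\<le>p m. pr (e a (t*(p m+1) + j)) \<in> good r y" if a: "a \<in> PiE J (\<lambda>_. {0..A})" and t: "t < A" for a t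
  proof -
    define k0 where "k0 = t * (p m + 1)"
    have k0b: "k0 + j < A * (p m + 1)" if "j \<le> p m" for j
    proof -
      have "k0 + j < (t + 1) * (p m + 1)" unfolding k0_def using that by simp
      also have "\<dots> \<le> A * (p m + 1)" using t by (intro mult_right_mono) auto
      finally show ?thesis .
    qed
    define G where "G = p 1 ^ k0 * pr (ext a)"
    define x where "x = real (pr (e a k0)) * y"
    have hx: "x = real G * (real (pr d) * y)" unfolding x_def G_def using pe by simp
    have hj: "real (pr (e a (k0 + j))) * y = real (p 1) ^ j * x" for j
      unfolding x_def using pe by (simp add: power_add algebra_simps)
    have "G = pr (\<lambda>j. (if j = 1 then k0 else 0) + ext a j)" unfolding G_def using pr_add pr_q by simp
    moreover have "(\<lambda>j. (if j = 1 then k0 else 0) + ext a j) i = 0" using iJ unfolding ext_def by simp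
    ultimately have cop: "coprime (p i) G" using pr_cop[of i] i by auto
    then have copi: "coprime (int (p i)) (int G)" by simp
    have ndvd: "\<not> int (p i) dvd (int G * N)" using N coprime_dvd_mult_right_iff[OF copi] by simp
    have d1: "dist_int (of_int (int G * N) / of_int (int (p i))) \<ge> 1 / of_int (int (p i))"
      using dist_int_frac[OF _ ndvd] p_gt1[of i] i by simp
    then have d1': "dist_int (of_int (int G * N) / real (p i)) \<ge> 1 / real (p i)" by simp
    have dec: "x = of_int (int G * N) / real (p i) + real G * (real (pr d) * y - of_int N / real (p i))"
      unfolding hx by (simp add: algebra_simps)
    have "\<bar>real G * (real (pr d) * y - of_int N / real (p i))\<bar> \<le> real G * (r/3 * real (pr d))"
      using mult_left_mono[OF approx, of "real G"] by (simp add: abs_mult)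
    also have "\<dots> = (real (pr (e a k0)) * r) / 3" using pe unfolding G_def by simp
    also have "\<dots> \<le> (1 / real (p m)) / 3" using hr[OF a k0b[of 0]] by simp
    finally have err: "\<bar>real G * (real (pr d) * y - of_int N / real (p i))\<bar> \<le> 1 / (3 * real (p m))" by simp
    have "dist_int x \<ge> 1 / real (p i) - 1 / (3 * real (p m))"
      using dist_int_pert[of "of_int (int G * N) / real (p i)" "real G * (real (pr d) * y - of_int N / real (p i))"]
        d1' err arg_cong[OF dec, of dist_int] by linarith
    moreover have "1 / real (p i) \<ge> 1 / real (p m)" using pile pi0 by (simp add: divide_simps)
    ultimately have "dist_int x \<ge> 2 / (3 * real (p m))" by simp
    then obtain j where j: "j \<le> p m" "dist_int (real (p 1) ^ j * x) \<ge> 1 / (3 * real (p 1))"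
      using block by blast
    have "real (pr (e a (k0 + j))) * r \<le> 1"
      using hr[OF a k0b[OF j(1)]] pmge by (smt (verit) le_divide_eq_1_pos)
    then have "pr (e a (k0 + j)) \<in> good r y" using good_intro j(2) hj by simp
    then show ?thesis using j(1) unfolding k0_def by blast
  qed
  have dv: "(t * (p m + 1) + j) div (p m + 1) = t" if "j \<le> p m" for t j
    using that by (metis add.commute div_less div_mult_self1 le_imp_less_Suc Suc_eq_plus1 add_cancel_right_right zero_neq_one add_eq_0_iff_both_eq_0)
  define sel where "sel a t = (SOME j. j \<le> p m \<and> pr (e a (t*(p m+1) + j)) \<in> good r y)" for a t
  have sel: "sel a t \<le> p m \<and> pr (e a (t*(p m+1) + sel a t)) \<in> good r y"
    if "a \<in> PiE J (\<lambda>_. {0..A})" "t < A" for a t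
    unfolding sel_def using someI_ex[OF key[OF that]] by blast
  define f where "f = (\<lambda>(a, t). pr (e a (t*(p m+1) + sel a t)))"
  have img: "f ` BB \<subseteq> good r y" unfolding f_def BB_def using sel by auto
  have inj: "inj_on f BB"
  proof (rule inj_onI)
    fix u v assume u: "u \<in> BB" and v: "v \<in> BB" and fe: "f u = f v"
    obtain a t where at: "u = (a, t)" by (cases u)
    obtain a' t' where at': "v = (a', t')" by (cases v)
    have a: "a \<in> PiE J (\<lambda>_. {0..A})" "t < A" using u at unfolding BB_def by auto
    have a': "a' \<in> PiE J (\<lambda>_. {0..A})" "t' < A" using v at' unfolding BB_def by auto
    define k where "k = t*(p m+1) + sel a t"
    define k' where "k' = t'*(p m+1) + sel a' t'"
    have eq: "pr (e a k) = pr (e a' k')" using fe at at' unfolding f_def k_def k'_def by simp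
    have "e a k 1 = e a' k' 1" using pr_unique[OF eq] m2 by simp
    then have kk: "k = k'" unfolding e_def ext_def using iJ by simp
    have "t = k div (p m + 1)" unfolding k_def using sel[OF a] dv by simp
    moreover have "t' = k' div (p m + 1)" unfolding k'_def using sel[OF a'] dv by simp
    ultimately have tt: "t = t'" using kk by simp
    have "a = a'"
    proof (rule PiE_ext[OF a(1) a'(1)])
      fix l assume l: "l \<in> J"
      then have l1: "l \<in> {1..m}" "l \<noteq> 1" unfolding J_def by auto
      have "e a k l = e a' k' l" using pr_unique[OF eq l1(1)] .
      then show "a l = a' l" unfolding e_def ext_def using l l1 by simp
    qed
    then show "u = v" using at at' tt by simp
  qed
  have cardJ: "card J = m - 2" unfolding J_def using i by (simp add: card_Diff_singleton)
  have fJ: "finite J" unfolding J_def by simp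
  have "card (PiE J (\<lambda>_. {0..A})) = (A+1)^(m-2)"
    using card_PiE[OF fJ, of "\<lambda>_. {0..A}"] cardJ by simp
  then have cardBB: "card BB = (A+1)^(m-2) * A" unfolding BB_def
    by (simp add: card_cartesian_product)
  have "A ^ (m-1) = A^(m-2) * A" using m2 by (metis Suc_diff_Suc Suc_1 diff_Suc_1 less_le_trans one_less_numeral_iff semiring_norm(76) power_Suc2)
  also have "\<dots> \<le> (A+1)^(m-2) * A" by (intro mult_right_mono power_mono) auto
  also have "\<dots> = card BB" using cardBB by simp
  also have "\<dots> \<le> card (good r y)" using card_inj_on_le[OF inj img good_finite[OF r]] .
  finally show ?thesis .
qed

end


context sset begin

lemma mainA:
  fixes r y B0 :: real and A :: nat
  assumes r: "0 < r" "r < 1"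
    and B1: "real (p m ^ (A*m)) \<le> B0" and B2: "real (p 1 ^ (A * (p m + 1))) \<le> B0"
    and B3: "B0^3 * r \<le> 1 / real (p m)"
    and y: "r/3 < \<bar>y\<bar>" "\<bar>y\<bar> \<le> 1/2"
  shows "A ^ (m-1) \<le> card (good r y)"
proof -
  define J where "J = {2..m}"
  define ext where "ext a = (\<lambda>j. if j \<in> J then a j else 0)" for a :: "nat \<Rightarrow> nat"
  define sh where "sh a k = (\<lambda>j. (if j = 1 then k else 0) + ext a j)" for a k
  define BA where "BA = PiE J (\<lambda>_. {0..A})"
  have psh: "pr (sh a k) = p 1 ^ k * pr (ext a)" for a k
    unfolding sh_def using pr_add pr_q by simp
  have pmge: "real (p m) \<ge> 2" using p_gt1[of m] m2 by simp
  have B0ge: "B0 \<ge> 1"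
  proof -
    have "p m ^ (A*m) \<ge> 1" using pmge by simp
    then show ?thesis using B1 by linarith
  qed
  have gbound: "real (pr (ext a)) \<le> B0" if "a \<in> BA" for a
  proof -
    have "\<forall>j\<in>{1..m}. ext a j \<le> A" using that unfolding ext_def BA_def by (auto simp: PiE_iff)
    then have "pr (ext a) \<le> p m ^ (A * m)" by (rule pr_bound)
    then show ?thesis using B1 by (meson of_nat_le_iff order_trans)
  qed
  have B0r: "B0 * r \<le> 1"
  proof -
    have "B0 * 1 \<le> B0 * B0^2" using B0ge by (intro mult_left_mono) (auto simp: one_le_power)
    then have "B0 \<le> B0^3" by (simp add: power3_eq_cube power2_eq_square)
    then have "B0 * r \<le> B0^3 * r" using r by simp
    also have "\<dots> \<le> 1 / real (p m)" by (rule B3)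
    also have "\<dots> \<le> 1" using pmge by simp
    finally show ?thesis .
  qed
  have g_r: "real (pr (ext a)) * r \<le> 1" if "a \<in> BA" for a
    using mult_right_mono[OF gbound[OF that], of r] r B0r by linarith
  have fin: "finite J" unfolding J_def by simp
  have cardJ: "card J = m - 1" unfolding J_def by simp
  show ?thesis
  proof (cases "\<forall>a\<in>BA. \<exists>k. pr (sh a k) \<in> good r y")
    case True
    define f where "f a = pr (sh a (SOME k. pr (sh a k) \<in> good r y))" for a
    have img: "f ` BA \<subseteq> good r y" unfolding f_def using True by (auto intro: someI_ex)
    have inj: "inj_on f BA"
    proof (rule inj_onI)
      fix a a' assume a: "a \<in> BA" and a': "a' \<in> BA" and fe: "f a = f a'"
      show "a = a'"
      proof (rule PiE_ext[OF a[unfolded BA_def] a'[unfolded BA_def]])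
        fix l assume l: "l \<in> J"
        then have l1: "l \<in> {1..m}" "l \<noteq> 1" unfolding J_def by auto
        from pr_unique[OF fe[unfolded f_def] l1(1)] show "a l = a' l"
          unfolding sh_def ext_def using l l1 by simp
      qed
    qed
    have "card BA = (A+1)^(m-1)" unfolding BA_def using card_PiE[OF fin, of "\<lambda>_. {0..A}"] cardJ by simp
    then have "A^(m-1) \<le> card BA" by (simp add: power_mono)
    also have "\<dots> \<le> card (good r y)" using card_inj_on_le[OF inj img good_finite[OF r(1)]] .
    finally show ?thesis .
  next
    case False
    then obtain a where a: "a \<in> BA" and nb: "\<forall>k. pr (sh a k) \<notin> good r y" by blast
    define g where "g = pr (ext a)"
    define q where "q = real (p 1)"
    have q1: "q > 1" unfolding q_def using p1 by simp
    have g1: "real g \<ge> 1" unfolding g_def using pr_pos[of "ext a"] by linarith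
    have bad: "dist_int (q ^ k * (real g * y)) < 1 / (3 * q)" if "real (p 1 ^ k * g) * r \<le> 1" for k
    proof (rule ccontr)
      assume "\<not> ?thesis"
      then have "dist_int (real (pr (sh a k)) * y) \<ge> 1 / (3 * real (p 1))"
        unfolding psh g_def[symmetric] q_def by (simp add: algebra_simps)
      moreover have "real (pr (sh a k)) * r \<le> 1" using that psh g_def by simp
      ultimately have "pr (sh a k) \<in> good r y" using good_intro[of "sh a k" r y] by blast
      then show False using nb by blast
    qed
    have ex: "\<exists>k. real (p 1 ^ (k+1) * g) * r > 1"
    proof -
      obtain n where n: "1 / r < q ^ n" using real_arch_pow[OF q1] by blast
      have "q ^ n \<le> q ^ (n+1) * real g" using q1 g1
        by (metis less_eq_real_def mult.right_neutral mult_left_mono power_increasing le_add1 zero_le_one order_trans zero_le_power less_imp_le)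
      then have "1 / r < q ^ (n+1) * real g" using n by linarith
      then have "1 < q ^ (n+1) * real g * r" using r by (simp add: divide_simps)
      then show ?thesis unfolding q_def by (intro exI[of _ n]) simp
    qed
    define K where "K = (LEAST k. real (p 1 ^ (k+1) * g) * r > 1)"
    have hK: "real (p 1 ^ (K+1) * g) * r > 1" unfolding K_def by (rule LeastI_ex[OF ex])
    have hK2: "real (p 1 ^ K * g) * r \<le> 1"
    proof (cases K)
      case 0 then show ?thesis using g_r[OF a] g_def by simp
    next
      case (Suc K')
      have "\<not> real (p 1 ^ (K'+1) * g) * r > 1"
        using not_less_Least[of K' "\<lambda>k. real (p 1 ^ (k+1) * g) * r > 1"] Suc unfolding K_def by simp
      then show ?thesis using Suc by simp
    qed
    have lej: "real (p 1 ^ j * g) * r \<le> 1" if "j \<le> K" for j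
    proof -
      have "p 1 ^ j \<le> p 1 ^ K" using that p1 by (intro power_increasing) auto
      then have "p 1 ^ j * g \<le> p 1 ^ K * g" by (rule mult_right_mono) simp
      then have "real (p 1 ^ j * g) \<le> real (p 1 ^ K * g)" by (simp only: of_nat_le_iff)
      then show ?thesis using hK2 r by (meson mult_right_mono less_imp_le order_trans)
    qed
    have "dist_int (q ^ K * (real g * y)) = q ^ K * dist_int (real g * y)"
      using chainN[of "p 1" K "real g * y"] bad lej p1 unfolding q_def by simp
    moreover have "dist_int (q ^ K * (real g * y)) < 1 / (3 * q)" using bad[OF hK2] .
    ultimately have "q ^ K * dist_int (real g * y) < 1 / (3 * q)" by simp
    then have d3: "q ^ (K+1) * dist_int (real g * y) * 3 < 1" using q1 by (simp add: divide_simps algebra_simps)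
    have hK': "q ^ (K+1) * (real g * r) > 1" using hK unfolding q_def by (simp add: algebra_simps)
    have qK: "q ^ (K+1) > 0" using q1 by simp
    have dg: "dist_int (real g * y) < r / 3 * real g"
    proof (rule ccontr)
      assume "\<not> ?thesis"
      then have "q ^ (K+1) * (r / 3 * real g) \<le> q ^ (K+1) * dist_int (real g * y)"
        using qK by (intro mult_left_mono) auto
      then show False using d3 hK' by (simp add: algebra_simps)
    qed
    obtain n0 where n0: "dist_int (real g * y) = \<bar>real g * y - of_int n0\<bar>" using dist_int_ex by blast
    have c1: "ext a 1 = 0" unfolding ext_def J_def by simp
    obtain d i N where dd: "pr d \<le> pr (ext a)" "i \<in> {2..m}" "\<not> int (p i) dvd N"
      "\<bar>real (pr d) * y - of_int N / real (p i)\<bar> \<le> r/3 * pr d"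
      using descent[of "r/3" y "ext a" "sum (ext a) {1..m}" n0] r y c1 n0 dg g_def by force
    have D: "real (pr d) \<le> B0" using dd(1) gbound[OF a] by (meson of_nat_le_iff order_trans)
    show ?thesis using mechB[OF r(1) B1 B2 B3 D dd(2) dd(3)] dd(4) by simp
  qed
qed

end


lemma exp_pow_bound:
  fixes x :: real and n :: nat and t :: real
  assumes "x > 0" "real n * ln x \<le> t"
  shows "x ^ n \<le> exp t"
proof -
  have "x ^ n = exp (ln x) ^ n" using assms(1) by simp
  also have "\<dots> = exp (real n * ln x)" by (simp add: exp_of_nat_mult)
  also have "\<dots> \<le> exp t" using assms(2) by simp
  finally show ?thesis .
qed

theorem mainTheorem10:
  fixes m :: nat and p :: "nat \<Rightarrow> nat"
  assumes "m \<ge> 2"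
    and "1 < p 1"
    and "\<forall>i j. 1 \<le> i \<longrightarrow> i < j \<longrightarrow> j \<le> m \<longrightarrow> p i < p j"
    and "\<forall>i\<in>{1..m}. \<forall>j\<in>{1..m}. i \<noteq> j \<longrightarrow> coprime (p i) (p j)"
  shows "\<exists>c>0. \<exists>r\<^sub>s>0. \<forall>(r::real) (y::real).
           0 < r \<and> r < r\<^sub>s \<and> r powr (2/3) < \<bar>y\<bar> \<and> \<bar>y\<bar> \<le> 1/2 \<longrightarrow>
           real (card {h \<in> smooth_set_r m p r. dist_int (real h * y) \<ge> 1 / (3 * real (p 1))})
             \<ge> c * (ln (1/r)) ^ (m - 1)"
proof -
  interpret sset m p using assms by unfold_locales auto
  define pm where "pm = real (p m)"
  have pm2: "pm \<ge> 2" unfolding pm_def using p_gt1[of m] assms(1) by simp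
  have lnpm: "ln pm > 0" using pm2 by simp
  define M where "M = 8 * real m * (pm + 1) * ln pm"
  have m1: "real m \<ge> 1" using assms(1) by simp
  have M0: "M > 0" unfolding M_def using lnpm m1 pm2 by simp
  define c where "c = (1 / (2 * M)) ^ (m - 1)"
  have c0: "c > 0" unfolding c_def using M0 by simp
  have "\<forall>(r::real) (y::real).
           0 < r \<and> r < exp (- 2 * M) \<and> r powr (2/3) < \<bar>y\<bar> \<and> \<bar>y\<bar> \<le> 1/2 \<longrightarrow>
           real (card {h \<in> smooth_set_r m p r. dist_int (real h * y) \<ge> 1 / (3 * real (p 1))})
             \<ge> c * (ln (1/r)) ^ (m - 1)"
  proof (intro allI impI)
    fix r y :: real
    assume h: "0 < r \<and> r < exp (- 2 * M) \<and> r powr (2/3) < \<bar>y\<bar> \<and> \<bar>y\<bar> \<le> 1/2"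
    then have r0: "0 < r" and rs: "r < exp (-2*M)" and y1: "r powr (2/3) < \<bar>y\<bar>" and y2: "\<bar>y\<bar> \<le> 1/2" by auto
    define \<Lambda> where "\<Lambda> = ln (1/r)"
    have lnr: "ln r < - 2 * M" using rs r0 by (metis ln_exp ln_less_cancel_iff exp_gt_zero)
    have L: "\<Lambda> > 2 * M" unfolding \<Lambda>_def using r0 lnr by (simp add: ln_div)
    have r1: "r < 1" using rs M0 by (smt (verit) exp_less_one_iff)
    have rexp: "r = exp (- \<Lambda>)" unfolding \<Lambda>_def using r0 by (simp add: ln_div)
    define A where "A = nat \<lfloor>\<Lambda> / M\<rfloor>"
    have L0: "\<Lambda> / M \<ge> 0" using L M0 by simp
    have A1: "real A \<le> \<Lambda> / M" unfolding A_def using L0 by linarith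
    have A2: "real A \<ge> \<Lambda> / M - 1" unfolding A_def using L0 by linarith
    have AM: "real A * M \<le> \<Lambda>" using A1 M0 by (simp add: field_simps)
    have key: "real A * real m * (pm + 1) * ln pm \<le> \<Lambda> / 8"
      using AM unfolding M_def by (simp add: algebra_simps)
    define B0 where "B0 = exp (\<Lambda> / 8)"
    have A0: "real A \<ge> 0" by simp
    have B1: "real (p m ^ (A*m)) \<le> B0"
    proof -
      have "real A * real m * 1 * ln pm \<le> real A * real m * (pm + 1) * ln pm"
        using lnpm pm2 A0 m1 by (intro mult_right_mono mult_left_mono) auto
      then have "real (A*m) * ln pm \<le> \<Lambda>/8" using key by simp
      then have "pm ^ (A*m) \<le> B0" unfolding B0_def using pm2 by (intro exp_pow_bound) auto
      then show ?thesis unfolding pm_def by simp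
    qed
    have B2: "real (p 1 ^ (A * (p m + 1))) \<le> B0"
    proof -
      have q0: "real (p 1) > 0" using p1 by simp
      have "ln (real (p 1)) \<le> ln pm" unfolding pm_def using p_le[of 1] assms(1) q0 by simp
      then have "real A * (pm + 1) * ln (real (p 1)) \<le> real A * (pm + 1) * ln pm"
        using A0 pm2 by (intro mult_left_mono) auto
      also have "\<dots> = real A * 1 * (pm + 1) * ln pm" by simp
      also have "\<dots> \<le> real A * real m * (pm + 1) * ln pm"
        using lnpm pm2 A0 m1 by (intro mult_right_mono mult_left_mono) auto
      finally have f1: "real A * (pm + 1) * ln (real (p 1)) \<le> real A * real m * (pm + 1) * ln pm" .
      have "real (A * (p m + 1)) * ln (real (p 1)) = real A * (pm + 1) * ln (real (p 1))"
        unfolding pm_def by (simp add: algebra_simps)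
      then have "real (A * (p m + 1)) * ln (real (p 1)) \<le> \<Lambda>/8" using key f1 by linarith
      then have "real (p 1) ^ (A * (p m + 1)) \<le> B0" unfolding B0_def using q0 by (intro exp_pow_bound) auto
      then show ?thesis by simp
    qed
    have B3: "B0^3 * r \<le> 1 / real (p m)"
    proof -
      have "B0^3 * r = exp (3 * (\<Lambda>/8)) * exp (- \<Lambda>)" unfolding B0_def rexp
        by (simp add: exp_of_nat_mult[symmetric])
      also have "\<dots> = exp (- (5 * \<Lambda> / 8))" by (simp add: exp_add[symmetric])
      also have "\<dots> \<le> exp (- ln pm)"
      proof -
        have "M \<ge> 8 * ln pm" unfolding M_def
        proof -
          have h1: "1 \<le> real m * (pm + 1)" using mult_mono[of 1 "real m" 1 "pm+1"] m1 pm2 by simp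
          have "ln pm \<le> real m * (pm+1) * ln pm" using lnpm mult_right_mono[OF h1, of "ln pm"] by simp
          then show "8 * ln pm \<le> 8 * real m * (pm + 1) * ln pm" by (simp add: algebra_simps)
        qed
        then have "ln pm \<le> 5 * \<Lambda> / 8" using L lnpm by linarith
        then show ?thesis by simp
      qed
      also have "\<dots> = 1 / pm" using pm2 by (simp add: exp_minus inverse_eq_divide)
      finally show ?thesis unfolding pm_def .
    qed
    have "r = r powr 1" using r0 by simp
    also have "\<dots> \<le> r powr (2/3)" using r0 r1 by (intro powr_mono') auto
    finally have ry: "r/3 < \<bar>y\<bar>" using y1 r0 by linarith
    have main: "A ^ (m-1) \<le> card (good r y)"
      using mainA[OF r0 r1 B1 B2 B3 ry y2] .
    have "c * \<Lambda> ^ (m-1) = (\<Lambda> / (2 * M)) ^ (m-1)" unfolding c_def by (simp add: power_mult_distrib[symmetric])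
    also have "\<dots> \<le> real A ^ (m-1)"
    proof (intro power_mono)
      show "\<Lambda> / (2 * M) \<le> real A"
      proof -
        have "\<Lambda> / M - 1 \<ge> \<Lambda> / (2 * M)" using L M0 by (simp add: field_simps)
        then show ?thesis using A2 by linarith
      qed
      show "0 \<le> \<Lambda> / (2 * M)" using L M0 by simp
    qed
    also have "\<dots> \<le> real (card (good r y))" using main by (metis of_nat_le_iff of_nat_power)
    finally show "real (card {h \<in> smooth_set_r m p r. dist_int (real h * y) \<ge> 1 / (3 * real (p 1))})
             \<ge> c * (ln (1/r)) ^ (m - 1)" unfolding good_def \<Lambda>_def .
  qed
  then show ?thesis using c0 by (intro exI[of _ c] conjI exI[of _ "exp (-2*M)"]) auto
qed


end
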